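(* Let $l\ge2$, $d\ge2$ and $X=X_{l,d}$. Under the action of the torus $T$ on $\mathbb{T}^1=\mathrm{Ext}^1(\Omega^1_X,\mathcal{O}_X)$, with character group identified with $M_0=\{u\in M:\deg(u)=0\}$, one has the weight decomposition $\mathbb{T}^1=\bigoplus_{u\in\Phi}\mathbb{T}^1_u$ with $\dim\mathbb{T}^1_u=1$ for every $u\in\Phi$, where $\Psi=\{u\in M_0:u+\epsilon\in\sigma^\vee\}$ and $\Phi=\Psi\setminus\{e_{ij}-e_{i'j'}:1\le i,i'\le l,\ 1\le j,j'\le d\}$.
   Context: $X_{l,d}=\{x_{11}\cdots x_{1d}+\dots+x_{l1}\cdots x_{ld}=0\}\subset\mathbb{P}^{ld-1}$. $\mathbf{Z}^{ld}$ has basis $e_{ij}$, $\epsilon_i=\sum_je_{ij}$, $M=\mathbf{Z}^{ld}/\langle\epsilon_1-\epsilon_2,\dots,\epsilon_1-\epsilon_l\rangle$ with images $e_{ij}$ and $\epsilon=\epsilon_1=\dots=\epsilon_l$; $\deg\colon M\to\mathbf{Z}$, $e_{ij}\mapsto1$; $\sigma^\vee$ is the cone in $M_\mathbf{R}$ generated by the $e_{ij}$. $\widetilde T=\{\mathrm{diag}(\lambda_{ij}):\prod_j\lambda_{1j}=\dots=\prod_j\lambda_{lj}\}\cong\mathrm{Spec}\,\mathbf{C}[M]$ (character $e_{ij}\leftrightarrow\lambda_{ij}$), $T=\widetilde T/\mathbf{C}^*$ with character group $M_0$. $T$ acts on $\mathbb{T}^1$, identified with $\mathbf{C}[x_{ij}]_d/\mathrm{span}\langle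 x_{i'j'}\prod_{k\ne j}x_{ik}\rangle$, by $\lambda\cdot g(x)=g(\lambda\cdot x)/(\lambda_{11}\cdots\lambda_{1d})$. *)

theory Defs
  imports Complex_Main "HOL-Library.Function_Algebras"
begin

definition idx :: "nat \<Rightarrow> nat \<Rightarrow> (nat \<times> nat) set" where
  "idx l d = {1..l} \<times> {1..d}"

text \<open>Z^{ld}: integer vectors supported on idx.\<close>
definition Zvec :: "nat \<Rightarrow> nat \<Rightarrow> (nat \<times> nat \<Rightarrow> int) set" where
  "Zvec l d = {v. \<forall>p. p \<notin> idx l d \<longrightarrow> v p = 0}"

text \<open>Basis vector e_ij and eps_i = sum_j e_ij (as real/int-valued functions).\<close>
definition ebas :: "nat \<Rightarrow> nat \<Rightarrow> nat \<times> nat \<Rightarrow> int" where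
  "ebas i j = (\<lambda>p. if p = (i, j) then 1 else 0)"

definition epsv :: "nat \<Rightarrow> nat \<Rightarrow> nat \<times> nat \<Rightarrow> int" where
  "epsv d i = (\<lambda>(a, b). if a = i \<and> b \<in> {1..d} then 1 else 0)"

text \<open>Equality in M = Z^{ld} / <eps_1 - eps_2, ..., eps_1 - eps_l> of the classes of two
  representatives.\<close>
definition Meq :: "nat \<Rightarrow> nat \<Rightarrow> (nat \<times> nat \<Rightarrow> int) \<Rightarrow> (nat \<times> nat \<Rightarrow> int) \<Rightarrow> bool" where
  "Meq l d v w \<longleftrightarrow> (\<exists>c :: nat \<Rightarrow> int. \<forall>p \<in> idx l d.
      v p - w p = (\<Sum>k\<in>{2..l}. c k * (epsv d 1 p - epsv d k p)))"

definition degM :: "nat \<Rightarrow> nat \<Rightarrow> (nat \<times> nat \<Rightarrow> int) \<Rightarrow> int" where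
  "degM l d v = (\<Sum>p\<in>idx l d. v p)"

text \<open>Membership of the class of u in sigma-dual, the cone in M_R generated by the e_ij:
  u = sum c_ij e_ij in M_R with c_ij >= 0, i.e. modulo the real span of eps_1 - eps_k.\<close>
definition in_sigma_dual :: "nat \<Rightarrow> nat \<Rightarrow> (nat \<times> nat \<Rightarrow> int) \<Rightarrow> bool" where
  "in_sigma_dual l d u \<longleftrightarrow> (\<exists>c :: nat \<times> nat \<Rightarrow> real. (\<forall>p \<in> idx l d. c p \<ge> 0) \<and>
      (\<exists>r :: nat \<Rightarrow> real. \<forall>p \<in> idx l d.
         real_of_int (u p) - c p = (\<Sum>k\<in>{2..l}. r k * real_of_int (epsv d 1 p - epsv d k p))))"

text \<open>Psi = {u in M_0 : u + eps in sigma-dual} (on representatives u in Z^{ld}).\<close>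
definition inPsi :: "nat \<Rightarrow> nat \<Rightarrow> (nat \<times> nat \<Rightarrow> int) \<Rightarrow> bool" where
  "inPsi l d u \<longleftrightarrow> u \<in> Zvec l d \<and> degM l d u = 0 \<and>
      in_sigma_dual l d (\<lambda>p. u p + epsv d 1 p)"

definition inPhi :: "nat \<Rightarrow> nat \<Rightarrow> (nat \<times> nat \<Rightarrow> int) \<Rightarrow> bool" where
  "inPhi l d u \<longleftrightarrow> inPsi l d u \<and>
     \<not> (\<exists>i\<in>{1..l}. \<exists>j\<in>{1..d}. \<exists>i'\<in>{1..l}. \<exists>j'\<in>{1..d}.
          Meq l d u (\<lambda>p. ebas i j p - ebas i' j' p))"

text \<open>Polynomials in the variables x_ij, represented by their coefficient functions on
  exponent vectors (nat x nat => nat).  Complex vector space structure: pointwise.\<close>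
type_synonym expo = "nat \<times> nat \<Rightarrow> nat"
type_synonym cpoly = "expo \<Rightarrow> complex"

definition sc :: "complex \<Rightarrow> cpoly \<Rightarrow> cpoly" where
  "sc c g = (\<lambda>a. c * g a)"

definition mons :: "nat \<Rightarrow> nat \<Rightarrow> expo set" where
  "mons l d = {a. (\<forall>p. p \<notin> idx l d \<longrightarrow> a p = 0) \<and> (\<Sum>p\<in>idx l d. a p) = d}"

definition Pd :: "nat \<Rightarrow> nat \<Rightarrow> cpoly set" where
  "Pd l d = {g. \<forall>a. g a \<noteq> 0 \<longrightarrow> a \<in> mons l d}"

definition monomial :: "expo \<Rightarrow> cpoly" where
  "monomial a = (\<lambda>b. if b = a then 1 else 0)"

definition relexp :: "nat \<Rightarrow> nat \<Rightarrow> nat \<Rightarrow> nat \<Rightarrow> nat \<Rightarrow> expo" where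
  "relexp d i j i' j' = (\<lambda>p. (if p = (i', j') then 1 else 0)
       + (if fst p = i \<and> snd p \<in> {1..d} - {j} then 1 else 0))"

definition Rel :: "nat \<Rightarrow> nat \<Rightarrow> cpoly set" where
  "Rel l d = module.span sc
     {monomial (relexp d i j i' j') | i j i' j'.
        i \<in> {1..l} \<and> j \<in> {1..d} \<and> i' \<in> {1..l} \<and> j' \<in> {1..d}}"

text \<open>The torus T-tilde (points are diagonal matrices, given by their entries lambda_ij).\<close>
definition Ttil :: "nat \<Rightarrow> nat \<Rightarrow> (nat \<times> nat \<Rightarrow> complex) set" where
  "Ttil l d = {lam. (\<forall>p\<in>idx l d. lam p \<noteq> 0) \<and>
      (\<forall>i\<in>{1..l}. (\<Prod>j\<in>{1..d}. lam (i, j)) = (\<Prod>j\<in>{1..d}. lam (1, j)))}"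

text \<open>The action lam . g(x) = g(lam . x) / (lam_11 ... lam_1d), written on coefficients:
  the monomial x^a is sent to lam^a x^a / (lam_11 ... lam_1d).\<close>
definition act :: "nat \<Rightarrow> nat \<Rightarrow> (nat \<times> nat \<Rightarrow> complex) \<Rightarrow> cpoly \<Rightarrow> cpoly" where
  "act l d lam g = (\<lambda>a. g a * (\<Prod>p\<in>idx l d. lam p ^ a p) / (\<Prod>j\<in>{1..d}. lam (1, j)))"

definition chi :: "nat \<Rightarrow> nat \<Rightarrow> (nat \<times> nat \<Rightarrow> int) \<Rightarrow> (nat \<times> nat \<Rightarrow> complex) \<Rightarrow> complex" where
  "chi l d u lam = (\<Prod>p\<in>idx l d. lam p powi u p)"

text \<open>Preimage in C[x]_d of the weight space T^1_u of T^1 = C[x]_d / Rel.\<close>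
definition wpre :: "nat \<Rightarrow> nat \<Rightarrow> (nat \<times> nat \<Rightarrow> int) \<Rightarrow> cpoly set" where
  "wpre l d u = {g \<in> Pd l d. \<forall>lam \<in> Ttil l d.
      act l d lam g - sc (chi l d u lam) g \<in> Rel l d}"

text \<open>dim T^1_u = dim (wpre u / Rel) = dim (wpre u) - dim Rel (finite dimensional).\<close>
definition dimT1w :: "nat \<Rightarrow> nat \<Rightarrow> (nat \<times> nat \<Rightarrow> int) \<Rightarrow> nat" where
  "dimT1w l d u = vector_space.dim sc (wpre l d u) - vector_space.dim sc (Rel l d)"

end

theory Submission
  imports Defs
begin

interpretation vs: vector_space sc
  by unfold_locales (auto simp: sc_def fun_eq_iff algebra_simps)

lemma sum_fun_apply: "(\<Sum>a\<in>S. f a) x = (\<Sum>a\<in>S. (f a) x)"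
  for f :: "'b \<Rightarrow> 'c \<Rightarrow> 'd::comm_monoid_add"
proof (cases "finite S")
  case True then show ?thesis by (induction S rule: finite_induct) auto
qed simp

definition supp_in :: "expo set \<Rightarrow> cpoly set" where
  "supp_in S = {g. \<forall>a. g a \<noteq> 0 \<longrightarrow> a \<in> S}"

lemma subspace_supp_in: "vs.subspace (supp_in S)"
  unfolding vs.subspace_def supp_in_def sc_def
  by (auto, metis add.right_neutral)

lemma monomial_apply: "monomial a b = (if b = a then 1 else 0)"
  by (simp add: monomial_def)

lemma span_monomials:
  assumes "finite S"
  shows "vs.span (monomial ` S) = supp_in S"
proof
  show "vs.span (monomial ` S) \<subseteq> supp_in S"
    by (rule vs.span_minimal[OF _ subspace_supp_in]) (auto simp: supp_in_def monomial_def split: if_splits)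
  show "supp_in S \<subseteq> vs.span (monomial ` S)"
  proof
    fix g assume g: "g \<in> supp_in S"
    have "g = (\<Sum>a\<in>S. sc (g a) (monomial a))"
    proof
      fix b
      have "(\<Sum>a\<in>S. sc (g a) (monomial a)) b = (\<Sum>a\<in>S. if b = a then g a else 0)"
        by (simp add: sum_fun_apply sc_def monomial_def)
          (rule sum.cong, auto)
      also have "\<dots> = g b" using g assms by (auto simp: supp_in_def)
      finally show "g b = (\<Sum>a\<in>S. sc (g a) (monomial a)) b" by simp
    qed
    also have "\<dots> \<in> vs.span (monomial ` S)"
      by (intro vs.span_sum vs.span_scale vs.span_base) auto
    finally show "g \<in> vs.span (monomial ` S)" .
  qed
qed

lemma inj_monomial: "inj monomial"
  by (auto simp: inj_def monomial_def fun_eq_iff split: if_splits)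

lemma independent_monomials: "vs.independent (monomial ` S)"
  unfolding vs.independent_explicit_module
proof (intro allI impI)
  fix t u v
  assume t: "finite t" "t \<subseteq> monomial ` S" and s: "(\<Sum>v\<in>t. sc (u v) v) = 0" and v: "v \<in> t"
  then obtain a where a: "v = monomial a" by auto
  have "0 = (\<Sum>w\<in>t. sc (u w) w) a" using s by simp
  also have "\<dots> = (\<Sum>w\<in>t. u w * w a)" by (simp add: sum_fun_apply sc_def)
  also have "\<dots> = (\<Sum>w\<in>t. if w = v then u v else 0)"
  proof (rule sum.cong)
    fix w assume "w \<in> t"
    then obtain b where b: "w = monomial b" using t by auto
    show "u w * w a = (if w = v then u v else 0)"
      using a b by (cases "a = b") (simp, auto simp: monomial_def fun_eq_iff)
  qed simp
  also have "\<dots> = u v" using t v by simp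
  finally show "u v = 0" by simp
qed

lemma dim_supp_in:
  assumes "finite S"
  shows "vs.dim (supp_in S) = card S"
proof -
  have "vs.dim (supp_in S) = vs.dim (vs.span (monomial ` S))"
    using span_monomials[OF assms] by simp
  also have "\<dots> = card (monomial ` S)"
    by (rule vs.dim_span_eq_card_independent[OF independent_monomials])
  also have "\<dots> = card S" by (rule card_image) (meson inj_monomial inj_on_subset subset_UNIV)
  finally show ?thesis .
qed


lemma idx_iff: "(i, j) \<in> idx l d \<longleftrightarrow> i \<in> {1..l} \<and> j \<in> {1..d}"
  by (simp add: idx_def)

lemma finite_idx: "finite (idx l d)" by (simp add: idx_def)

lemma eps_comb:
  fixes r :: "nat \<Rightarrow> 'a::comm_ring_1"
  assumes "i \<in> {1..l}" "j \<in> {1..d}"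
  shows "(\<Sum>k\<in>{2..l}. r k * of_int (epsv d 1 (i,j) - epsv d k (i,j)))
         = (if i = 1 then (\<Sum>k\<in>{2..l}. r k) else - r i)"
proof -
  have "(\<Sum>k\<in>{2..l}. r k * of_int (epsv d 1 (i,j) - epsv d k (i,j)))
      = (\<Sum>k\<in>{2..l}. (if i = 1 then r k else 0) - (if k = i then r k else 0))"
    using assms by (intro sum.cong) (auto simp: epsv_def)
  also have "\<dots> = (if i = 1 then (\<Sum>k\<in>{2..l}. r k) else 0) - (if i \<in> {2..l} then r i else 0)"
    by (simp add: sum_subtractf)
  also have "\<dots> = (if i = 1 then (\<Sum>k\<in>{2..l}. r k) else - r i)"
    using assms by auto
  finally show ?thesis .
qed

lemma sum_split1: "(l::nat) \<ge> 1 \<Longrightarrow> (\<Sum>i\<in>{1..l}. f i) = f 1 + (\<Sum>i\<in>{2..l}. f i)"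
  using sum.atLeast_Suc_atMost[of 1 l f] by (simp add: numeral_2_eq_2)

lemma Meq_iff:
  assumes "l \<ge> 1"
  shows "Meq l d v w \<longleftrightarrow> (\<exists>s. (\<forall>i\<in>{1..l}. \<forall>j\<in>{1..d}. v (i,j) - w (i,j) = s i)
           \<and> (\<Sum>i\<in>{1..l}. s i) = 0)"
proof
  assume "Meq l d v w"
  then obtain c where c: "\<forall>p\<in>idx l d. v p - w p = (\<Sum>k\<in>{2..l}. c k * (epsv d 1 p - epsv d k p))"
    by (auto simp: Meq_def)
  define s where "s i = (if i = 1 then (\<Sum>k\<in>{2..l}. c k) else - c i)" for i
  have "\<forall>i\<in>{1..l}. \<forall>j\<in>{1..d}. v (i,j) - w (i,j) = s i"
  proof (intro ballI)
    fix i j assume ij: "i \<in> {1..l}" "j \<in> {1..d}"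
    have "v (i,j) - w (i,j) = (\<Sum>k\<in>{2..l}. c k * of_int (epsv d 1 (i,j) - epsv d k (i,j)))"
      using c ij by (simp add: idx_iff)
    also have "\<dots> = s i" using eps_comb[OF ij, of c] by (simp add: s_def)
    finally show "v (i,j) - w (i,j) = s i" .
  qed
  moreover have "(\<Sum>i\<in>{1..l}. s i) = 0"
  proof -
    have "(\<Sum>i\<in>{2..l}. s i) = (\<Sum>i\<in>{2..l}. - c i)" by (intro sum.cong) (auto simp: s_def)
    then show ?thesis using sum_split1[OF assms, of s] by (simp add: s_def sum_negf)
  qed
  ultimately show "\<exists>s. (\<forall>i\<in>{1..l}. \<forall>j\<in>{1..d}. v (i,j) - w (i,j) = s i) \<and> (\<Sum>i\<in>{1..l}. s i) = 0"
    by blast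
next
  assume "\<exists>s. (\<forall>i\<in>{1..l}. \<forall>j\<in>{1..d}. v (i,j) - w (i,j) = s i) \<and> (\<Sum>i\<in>{1..l}. s i) = 0"
  then obtain s where s: "\<forall>i\<in>{1..l}. \<forall>j\<in>{1..d}. v (i,j) - w (i,j) = s i"
    and s0: "(\<Sum>i\<in>{1..l}. s i) = 0" by blast
  have s1: "s 1 = - (\<Sum>k\<in>{2..l}. s k)" using s0 sum_split1[OF assms, of s] by simp
  show "Meq l d v w" unfolding Meq_def
  proof (intro exI[of _ "\<lambda>k. - s k"] ballI)
    fix p assume "p \<in> idx l d"
    then obtain i j where p: "p = (i,j)" and ij: "i \<in> {1..l}" "j \<in> {1..d}"
      by (cases p) (auto simp: idx_iff)
    have "(\<Sum>k\<in>{2..l}. - s k * (epsv d 1 p - epsv d k p))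
        = (\<Sum>k\<in>{2..l}. - s k * of_int (epsv d 1 (i,j) - epsv d k (i,j)))" by (simp add: p)
    also have "\<dots> = s i" using eps_comb[OF ij, of "\<lambda>k. - s k"] s1 by (simp add: sum_negf)
    finally show "v p - w p = (\<Sum>k\<in>{2..l}. - s k * (epsv d 1 p - epsv d k p))"
      using s ij p by simp
  qed
qed


lemma Meq_trans:
  assumes "l \<ge> 1" "Meq l d v w" "Meq l d w x" shows "Meq l d v x"
proof -
  obtain s where s: "\<forall>i\<in>{1..l}. \<forall>j\<in>{1..d}. v (i,j) - w (i,j) = s i" "(\<Sum>i\<in>{1..l}. s i) = 0"
    using assms Meq_iff by blast
  obtain t where t: "\<forall>i\<in>{1..l}. \<forall>j\<in>{1..d}. w (i,j) - x (i,j) = t i" "(\<Sum>i\<in>{1..l}. t i) = 0"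
    using assms Meq_iff by blast
  have "(\<forall>i\<in>{1..l}. \<forall>j\<in>{1..d}. v (i,j) - x (i,j) = s i + t i) \<and> (\<Sum>i\<in>{1..l}. s i + t i) = 0"
  proof (intro conjI ballI)
    fix i j assume ij: "i \<in> {1..l}" "j \<in> {1..d}"
    have "v (i,j) - w (i,j) = s i" "w (i,j) - x (i,j) = t i" using s(1) t(1) ij by auto
    then show "v (i,j) - x (i,j) = s i + t i" by linarith
  next
    show "(\<Sum>i\<in>{1..l}. s i + t i) = 0" using s(2) t(2) by (simp add: sum.distrib)
  qed
  then show ?thesis unfolding Meq_iff[OF assms(1)] by (rule exI[of _ "\<lambda>i. s i + t i"])
qed

lemma Meq_sym:
  assumes "l \<ge> 1" "Meq l d v w" shows "Meq l d w v"
proof -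
  obtain s where s: "\<forall>i\<in>{1..l}. \<forall>j\<in>{1..d}. v (i,j) - w (i,j) = s i" "(\<Sum>i\<in>{1..l}. s i) = 0"
    using assms Meq_iff by blast
  have "(\<forall>i\<in>{1..l}. \<forall>j\<in>{1..d}. w (i,j) - v (i,j) = - s i) \<and> (\<Sum>i\<in>{1..l}. - s i) = 0"
  proof (intro conjI ballI)
    fix i j assume ij: "i \<in> {1..l}" "j \<in> {1..d}"
    have "v (i,j) - w (i,j) = s i" using s(1) ij by auto
    then show "w (i,j) - v (i,j) = - s i" by linarith
  next
    show "(\<Sum>i\<in>{1..l}. - s i) = 0" using s(2) by (simp add: sum_negf)
  qed
  then show ?thesis unfolding Meq_iff[OF assms(1)] by (rule exI[of _ "\<lambda>i. - s i"])
qed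

lemma finite_mons: "finite (mons l d)"
proof -
  have "mons l d \<subseteq> {f. \<forall>x. (x \<in> idx l d \<longrightarrow> f x \<in> {0..d}) \<and> (x \<notin> idx l d \<longrightarrow> f x = 0)}"
  proof safe
    fix a x assume a: "a \<in> mons l d" and x: "x \<in> idx l d"
    have "a x \<le> (\<Sum>p\<in>idx l d. a p)" by (rule member_le_sum) (use x finite_idx in auto)
    then show "a x \<in> {0..d}" using a by (auto simp: mons_def)
  qed (auto simp: mons_def)
  then show ?thesis by (rule finite_subset) (intro finite_set_of_finite_funs finite_idx, simp)
qed

definition RE :: "nat \<Rightarrow> nat \<Rightarrow> expo set" where
  "RE l d = {relexp d i j i' j' | i j i' j'. i \<in> {1..l} \<and> j \<in> {1..d} \<and> i' \<in> {1..l} \<and> j' \<in> {1..d}}"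

lemma sum_indicator_nat: "finite A \<Longrightarrow> (\<Sum>p\<in>A. (if P p then 1 else 0::nat)) = card {p\<in>A. P p}"
  by (simp add: sum.If_cases Int_def conj_commute)

lemma relexp_mons:
  assumes "i \<in> {1..l}" "j \<in> {1..d}" "i' \<in> {1..l}" "j' \<in> {1..d}"
  shows "relexp d i j i' j' \<in> mons l d"
proof -
  have 1: "(\<Sum>p\<in>idx l d. (if p = (i', j') then 1 else 0::nat)) = 1"
    using assms by (simp add: idx_iff finite_idx)
  have "{p \<in> idx l d. fst p = i \<and> snd p \<in> {1..d} - {j}} = {i} \<times> ({1..d} - {j})"
    using assms by (auto simp: idx_def)
  then have 2: "(\<Sum>p\<in>idx l d. (if fst p = i \<and> snd p \<in> {1..d} - {j} then 1 else 0::nat)) = d - 1"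
    using assms by (simp add: sum_indicator_nat finite_idx)
  have "(\<Sum>p\<in>idx l d. relexp d i j i' j' p) = 1 + (d - 1)"
    unfolding relexp_def by (simp only: sum.distrib 1 2)
  also have "\<dots> = d" using assms by simp
  finally have S: "(\<Sum>p\<in>idx l d. relexp d i j i' j' p) = d" .
  have Z: "relexp d i j i' j' p = 0" if "p \<notin> idx l d" for p
  proof -
    have "p \<noteq> (i', j')" using that assms by (auto simp: idx_iff)
    moreover have "\<not> (fst p = i \<and> snd p \<in> {1..d} - {j})"
      using that assms by (cases p) (auto simp: idx_iff)
    ultimately show ?thesis by (simp add: relexp_def)
  qed
  show ?thesis using S Z by (simp add: mons_def)
qed

lemma RE_mons: "RE l d \<subseteq> mons l d"
  by (auto simp: RE_def intro: relexp_mons)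

lemma finite_RE: "finite (RE l d)"
  using RE_mons finite_mons finite_subset by blast

lemma Rel_eq: "Rel l d = supp_in (RE l d)"
proof -
  have "{monomial (relexp d i j i' j') | i j i' j'.
        i \<in> {1..l} \<and> j \<in> {1..d} \<and> i' \<in> {1..l} \<and> j' \<in> {1..d}} = monomial ` RE l d"
    unfolding RE_def by blast
  then show ?thesis by (simp add: Rel_def span_monomials[OF finite_RE])
qed

lemma Pd_eq: "Pd l d = supp_in (mons l d)"
  by (auto simp: Pd_def supp_in_def)

lemma relexp_Meq:
  assumes "l \<ge> 1" "i \<in> {1..l}" "j \<in> {1..d}" "i' \<in> {1..l}" "j' \<in> {1..d}"
  shows "Meq l d (\<lambda>p. int (relexp d i j i' j' p) - epsv d 1 p) (\<lambda>p. ebas i' j' p - ebas i j p)"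
proof -
  define s where "s k = (if k = i then 1 else 0) - (if k = 1 then 1 else (0::int))" for k
  have "\<forall>a\<in>{1..l}. \<forall>b\<in>{1..d}. (int (relexp d i j i' j' (a,b)) - epsv d 1 (a,b))
          - (ebas i' j' (a,b) - ebas i j (a,b)) = s a"
  proof (intro ballI)
    fix a b assume ab: "a \<in> {1..l}" "b \<in> {1..d}"
    have e1: "int (relexp d i j i' j' (a,b)) = (if (a,b) = (i',j') then 1 else 0) + (if a = i \<and> b \<noteq> j then 1 else 0)"
      using ab by (simp add: relexp_def)
    have e2: "epsv d 1 (a,b) = (if a = 1 then 1 else 0)" using ab by (simp add: epsv_def)
    have e3: "ebas i' j' (a,b) - ebas i j (a,b) = (if (a,b) = (i',j') then 1 else 0) - (if (a,b) = (i,j) then 1 else 0)"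
      by (simp add: ebas_def)
    show "(int (relexp d i j i' j' (a,b)) - epsv d 1 (a,b)) - (ebas i' j' (a,b) - ebas i j (a,b)) = s a"
      unfolding e1 e2 e3 s_def by (cases "a = i"; cases "b = j") auto
  qed
  moreover have "(\<Sum>k\<in>{1..l}. s k) = 0" using assms by (simp add: s_def sum_subtractf)
  ultimately show ?thesis unfolding Meq_iff[OF assms(1)] by blast
qed


lemma prod_powi: "(\<Prod>i\<in>A. f i) powi n = (\<Prod>i\<in>A. f i powi n)"
  for f :: "'b \<Rightarrow> complex"
proof (cases "finite A")
  case True then show ?thesis by (induction A rule: finite_induct) (auto simp: power_int_mult_distrib)
qed simp

lemma powi_sum: "x \<noteq> 0 \<Longrightarrow> x powi (\<Sum>i\<in>A. f i) = (\<Prod>i\<in>A. x powi f i)"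
  for x :: complex
proof (cases "finite A")
  case True then show "x \<noteq> 0 \<Longrightarrow> ?thesis" by (induction A rule: finite_induct) (auto simp: power_int_add)
qed simp

lemma prod_idx: "(\<Prod>p\<in>idx l d. g p) = (\<Prod>i\<in>{1..l}. \<Prod>j\<in>{1..d}. g (i,j))"
  unfolding idx_def by (simp add: prod.cartesian_product)

lemma sum_idx: "(\<Sum>p\<in>idx l d. g p) = (\<Sum>i\<in>{1..l}. \<Sum>j\<in>{1..d}. g (i,j))"
  unfolding idx_def by (simp add: sum.cartesian_product)

lemma two_powi_eq_1: "(2::complex) powi n = 1 \<Longrightarrow> n = 0"
proof -
  assume "(2::complex) powi n = 1"
  then have h: "(2::real) powi n = 1"
    by (metis of_real_1 of_real_eq_iff of_real_numeral of_real_power_int)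
  then have "(2::real) powi n \<le> 2 powi 0" by simp
  then have "n \<le> 0" using power_int_le_imp_le_exp[of "2::real" n 0] by simp
  moreover have "(2::real) powi (-n) \<le> 2 powi 0" using h by (simp add: power_int_minus)
  then have "-n \<le> 0" using power_int_le_imp_le_exp[of "2::real" "-n" 0] by simp
  ultimately show "n = 0" by simp
qed

lemma prod_two:
  assumes "finite S" "x \<in> S" "y \<in> S" "x \<noteq> y"
  shows "(\<Prod>p\<in>S. if p = x then A else if p = y then B else 1) = A * (B::complex)"
proof -
  have "(\<Prod>p\<in>S. if p = x then A else if p = y then B else 1)
      = A * (\<Prod>p\<in>S - {x}. if p = x then A else if p = y then B else 1)"
    using assms by (subst prod.remove[of S x]) auto
  also have "(\<Prod>p\<in>S - {x}. if p = x then A else if p = y then B else 1)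
      = (\<Prod>p\<in>S - {x}. if p = y then B else 1)" by (intro prod.cong) auto
  also have "\<dots> = B" using assms by (simp add: prod.delta)
  finally show ?thesis .
qed

lemma char_trivial:
  assumes "l \<ge> 1" "lam \<in> Ttil l d" "Meq l d v (\<lambda>_. 0)"
  shows "(\<Prod>p\<in>idx l d. lam p powi v p) = 1"
proof -
  obtain s where s: "\<forall>i\<in>{1..l}. \<forall>j\<in>{1..d}. v (i,j) = s i" "(\<Sum>i\<in>{1..l}. s i) = 0"
    using assms(3) unfolding Meq_iff[OF assms(1)] by auto
  define R where "R = (\<Prod>j\<in>{1..d}. lam (1, j))"
  have nz: "lam (1, j) \<noteq> 0" if "j \<in> {1..d}" for j
  proof -
    have "(1, j) \<in> idx l d" using assms(1) that by (simp add: idx_iff)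
    then show ?thesis using assms(2) unfolding Ttil_def by blast
  qed
  have R0: "R \<noteq> 0" unfolding R_def prod_zero_iff[OF finite_atLeastAtMost] using nz by blast
  have "(\<Prod>p\<in>idx l d. lam p powi v p) = (\<Prod>i\<in>{1..l}. \<Prod>j\<in>{1..d}. lam (i,j) powi s i)"
    unfolding prod_idx using s by (intro prod.cong) auto
  also have "\<dots> = (\<Prod>i\<in>{1..l}. (\<Prod>j\<in>{1..d}. lam (i,j)) powi s i)"
    by (simp add: prod_powi)
  also have "\<dots> = (\<Prod>i\<in>{1..l}. R powi s i)"
  proof (rule prod.cong)
    fix i assume "i \<in> {1..l}"
    then have "(\<Prod>j\<in>{1..d}. lam (i,j)) = R" using assms(2) unfolding Ttil_def R_def by blast
    then show "(\<Prod>j\<in>{1..d}. lam (i,j)) powi s i = R powi s i" by simp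
  qed simp
  also have "\<dots> = R powi (\<Sum>i\<in>{1..l}. s i)" using R0 by (simp add: powi_sum)
  also have "\<dots> = 1" using s by simp
  finally show ?thesis .
qed

lemma char_sep:
  assumes "l \<ge> 1" "\<forall>lam \<in> Ttil l d. (\<Prod>p\<in>idx l d. lam p powi v p) = 1"
  shows "Meq l d v (\<lambda>_. 0)"
proof -
  have row: "v (i,j) = v (i,j')" if ij: "i \<in> {1..l}" "j \<in> {1..d}" "j' \<in> {1..d}" "j \<noteq> j'" for i j j'
  proof -
    define lam :: "nat \<times> nat \<Rightarrow> complex" where
      "lam p = (if p = (i,j) then 2 else if p = (i,j') then 1/2 else 1)" for p
    have rows: "(\<Prod>k\<in>{1..d}. lam (a, k)) = 1" for a
    proof (cases "a = i")
      case True
      have "(\<Prod>k\<in>{1..d}. lam (a, k)) = (\<Prod>k\<in>{1..d}. if k = j then 2 else if k = j' then 1/2 else 1)"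
        using True by (intro prod.cong) (auto simp: lam_def)
      also have "\<dots> = 2 * (1/2)" using ij by (intro prod_two) auto
      finally show ?thesis by simp
    next
      case False then show ?thesis by (simp add: lam_def)
    qed
    have "\<forall>p. lam p \<noteq> 0" by (simp add: lam_def)
    then have "lam \<in> Ttil l d" unfolding Ttil_def using rows by fastforce
    then have "1 = (\<Prod>p\<in>idx l d. lam p powi v p)" using assms(2) by simp
    also have "\<dots> = (\<Prod>p\<in>idx l d. if p = (i,j) then 2 powi v (i,j) else if p = (i,j') then (1/2) powi v (i,j') else 1)"
      by (intro prod.cong) (auto simp: lam_def)
    also have "\<dots> = 2 powi v (i,j) * (1/2) powi v (i,j')"
      using ij by (intro prod_two) (auto simp: finite_idx idx_iff)
    also have "\<dots> = 2 powi (v (i,j) - v (i,j'))"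
      by (simp add: power_int_diff power_int_divide_distrib)
    finally show ?thesis using two_powi_eq_1 by force
  qed
  define lam :: "nat \<times> nat \<Rightarrow> complex" where "lam p = (if snd p = 1 then 2 else 1)" for p
  have rows: "(\<Prod>k\<in>{1..d}. lam (a, k)) = (if d \<ge> 1 then 2 else 1)" for a
    by (simp add: lam_def prod.delta)
  have "\<forall>p. lam p \<noteq> 0" by (simp add: lam_def)
  then have "lam \<in> Ttil l d" unfolding Ttil_def using rows by fastforce
  then have "1 = (\<Prod>p\<in>idx l d. lam p powi v p)" using assms(2) by simp
  also have "\<dots> = (\<Prod>i\<in>{1..l}. \<Prod>j\<in>{1..d}. if j = 1 then 2 powi v (i,1) else 1)"
    unfolding prod_idx by (intro prod.cong) (auto simp: lam_def)
  also have "\<dots> = (\<Prod>i\<in>{1..l}. if d \<ge> 1 then 2 powi v (i,1) else 1)"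
    by (intro prod.cong) (auto simp: prod.delta)
  finally have P: "1 = (\<Prod>i\<in>{1..l}. if d \<ge> 1 then 2 powi v (i,1) else (1::complex))" .
  show ?thesis
  proof (cases "d \<ge> 1")
    case False
    then have "d = 0" by simp
    then show ?thesis by (auto simp: Meq_def idx_def)
  next
    case True
    then have "(2::complex) powi (\<Sum>i\<in>{1..l}. v (i,1)) = 1" using P by (simp add: powi_sum)
    then have s0: "(\<Sum>i\<in>{1..l}. v (i,1)) = 0" by (rule two_powi_eq_1)
    have "\<forall>i\<in>{1..l}. \<forall>j\<in>{1..d}. v (i,j) - 0 = v (i,1)"
    proof (intro ballI)
      fix i j assume ij: "i \<in> {1..l}" "j \<in> {1..d}"
      show "v (i,j) - 0 = v (i,1)"
      proof (cases "j = 1")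
        case False
        then show ?thesis using row[OF ij, of 1] True by simp
      qed simp
    qed
    then have "(\<forall>i\<in>{1..l}. \<forall>j\<in>{1..d}. v (i,j) - 0 = v (i,1)) \<and> (\<Sum>i\<in>{1..l}. v (i,1)) = 0"
      using s0 by (rule conjI)
    then show ?thesis unfolding Meq_iff[OF assms(1)] by (rule exI[of _ "\<lambda>i. v (i,1)"])
  qed
qed


lemma Meq_cong:
  assumes "\<forall>p\<in>idx l d. x p - y p = x' p - y' p"
  shows "Meq l d x y = Meq l d x' y'"
  using assms by (simp add: Meq_def)

lemma D_eq:
  assumes "l \<ge> 1"
  shows "(\<Prod>j\<in>{1..d}. lam (1, j)) = (\<Prod>p\<in>idx l d. lam p powi epsv d 1 p)"
proof -
  have "(\<Prod>p\<in>idx l d. lam p powi epsv d 1 p)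
      = (\<Prod>i\<in>{1..l}. if i = 1 then (\<Prod>j\<in>{1..d}. lam (i, j)) else 1)"
    unfolding prod_idx by (intro prod.cong) (auto simp: epsv_def)
  also have "\<dots> = (\<Prod>j\<in>{1..d}. lam (1, j))" using assms by (simp add: prod.delta')
  finally show ?thesis by simp
qed

lemma weight_iff:
  assumes "l \<ge> 1"
  shows "(\<forall>lam\<in>Ttil l d. (\<Prod>p\<in>idx l d. lam p ^ a p) / (\<Prod>j\<in>{1..d}. lam (1, j)) = chi l d u lam)
     \<longleftrightarrow> Meq l d (\<lambda>p. int (a p) - epsv d 1 p) u"
proof -
  define w where "w p = int (a p) - epsv d 1 p - u p" for p
  have pt: "(\<Prod>p\<in>idx l d. lam p ^ a p) / (\<Prod>j\<in>{1..d}. lam (1, j)) = chi l d u lam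
        \<longleftrightarrow> (\<Prod>p\<in>idx l d. lam p powi w p) = 1" if lam: "lam \<in> Ttil l d" for lam
  proof -
    have nz: "lam p \<noteq> 0" if "p \<in> idx l d" for p using lam that by (auto simp: Ttil_def)
    define P where "P = (\<Prod>p\<in>idx l d. lam p ^ a p)"
    define D where "D = (\<Prod>p\<in>idx l d. lam p powi epsv d 1 p)"
    have D0: "D \<noteq> 0" unfolding D_def prod_zero_iff[OF finite_idx] using nz by (auto simp: power_int_not_zero)
    have C0: "chi l d u lam \<noteq> 0" unfolding chi_def prod_zero_iff[OF finite_idx] using nz by (auto simp: power_int_not_zero)
    have "(\<Prod>p\<in>idx l d. lam p powi w p) = (\<Prod>p\<in>idx l d. lam p ^ a p / lam p powi epsv d 1 p / lam p powi u p)"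
      using nz by (intro prod.cong) (auto simp: w_def power_int_diff)
    also have "\<dots> = P / D / chi l d u lam"
      by (simp only: prod_dividef P_def D_def chi_def)
    finally have "(\<Prod>p\<in>idx l d. lam p powi w p) = P / D / chi l d u lam" .
    moreover have "(\<Prod>j\<in>{1..d}. lam (1, j)) = D" using D_eq[OF assms] by (simp add: D_def)
    ultimately show ?thesis using D0 C0 by (auto simp: P_def field_simps)
  qed
  have "(\<forall>lam\<in>Ttil l d. (\<Prod>p\<in>idx l d. lam p ^ a p) / (\<Prod>j\<in>{1..d}. lam (1, j)) = chi l d u lam)
      \<longleftrightarrow> (\<forall>lam\<in>Ttil l d. (\<Prod>p\<in>idx l d. lam p powi w p) = 1)" using pt by blast
  also have "\<dots> \<longleftrightarrow> Meq l d w (\<lambda>_. 0)" using char_trivial[OF assms] char_sep[OF assms] by blast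
  also have "\<dots> \<longleftrightarrow> Meq l d (\<lambda>p. int (a p) - epsv d 1 p) u" by (rule Meq_cong) (simp add: w_def)
  finally show ?thesis .
qed

definition Aset :: "nat \<Rightarrow> nat \<Rightarrow> (nat \<times> nat \<Rightarrow> int) \<Rightarrow> expo set" where
  "Aset l d u = {a \<in> mons l d - RE l d. Meq l d (\<lambda>p. int (a p) - epsv d 1 p) u}"

lemma act_diff_apply:
  "(act l d lam g - sc c g) a = g a * ((\<Prod>p\<in>idx l d. lam p ^ a p) / (\<Prod>j\<in>{1..d}. lam (1, j)) - c)"
  by (simp add: act_def sc_def algebra_simps)

lemma wpre_eq:
  assumes "l \<ge> 1"
  shows "wpre l d u = supp_in (RE l d \<union> Aset l d u)"
proof
  show "wpre l d u \<subseteq> supp_in (RE l d \<union> Aset l d u)"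
  proof (safe)
    fix g assume g: "g \<in> wpre l d u"
    show "g \<in> supp_in (RE l d \<union> Aset l d u)" unfolding supp_in_def mem_Collect_eq
    proof (intro allI impI)
      fix a assume ga: "g a \<noteq> 0"
      show "a \<in> RE l d \<union> Aset l d u"
      proof (cases "a \<in> RE l d")
        case True then show ?thesis by simp
      next
        case False
        then have aR: "a \<notin> RE l d" .
      have am: "a \<in> mons l d" using g ga by (auto simp: wpre_def Pd_def)
      have "\<forall>lam\<in>Ttil l d. (\<Prod>p\<in>idx l d. lam p ^ a p) / (\<Prod>j\<in>{1..d}. lam (1, j)) = chi l d u lam"
      proof
        fix lam assume "lam \<in> Ttil l d"
        then have "act l d lam g - sc (chi l d u lam) g \<in> supp_in (RE l d)"
          using g by (auto simp: wpre_def Rel_eq)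
        then have "(act l d lam g - sc (chi l d u lam) g) a = 0" using aR by (auto simp: supp_in_def)
        then have "g a * ((\<Prod>p\<in>idx l d. lam p ^ a p) / (\<Prod>j\<in>{1..d}. lam (1, j)) - chi l d u lam) = 0"
          by (simp only: act_diff_apply)
        then show "(\<Prod>p\<in>idx l d. lam p ^ a p) / (\<Prod>j\<in>{1..d}. lam (1, j)) = chi l d u lam"
          using ga by (simp add: act_diff_apply)
      qed
      then show ?thesis using weight_iff[OF assms] am aR by (auto simp: Aset_def)
      qed
    qed
  qed
  show "supp_in (RE l d \<union> Aset l d u) \<subseteq> wpre l d u"
  proof
    fix g assume g: "g \<in> supp_in (RE l d \<union> Aset l d u)"
    have "g \<in> Pd l d" using g RE_mons by (auto simp: supp_in_def Pd_def Aset_def)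
    moreover have "act l d lam g - sc (chi l d u lam) g \<in> Rel l d" if lam: "lam \<in> Ttil l d" for lam
      unfolding Rel_eq supp_in_def
    proof (safe)
      fix b assume nz: "(act l d lam g - sc (chi l d u lam) g) b \<noteq> 0"
      show "b \<in> RE l d"
      proof (rule ccontr)
        assume "b \<notin> RE l d"
        moreover have "g b * ((\<Prod>p\<in>idx l d. lam p ^ b p) / (\<Prod>j\<in>{1..d}. lam (1, j)) - chi l d u lam) \<noteq> 0"
          by (metis nz act_diff_apply)
        then have "g b \<noteq> 0" by auto
        ultimately have "b \<in> Aset l d u" using g by (auto simp: supp_in_def)
        then have "(\<Prod>p\<in>idx l d. lam p ^ b p) / (\<Prod>j\<in>{1..d}. lam (1, j)) = chi l d u lam"
          using weight_iff[OF assms] lam by (auto simp: Aset_def)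
        then show False using \<open>g b * ((\<Prod>p\<in>idx l d. lam p ^ b p) / (\<Prod>j\<in>{1..d}. lam (1, j)) - chi l d u lam) \<noteq> 0\<close> by simp
      qed
    qed
    ultimately show "g \<in> wpre l d u" by (simp add: wpre_def)
  qed
qed

lemma dimT1w_eq:
  assumes "l \<ge> 1"
  shows "dimT1w l d u = card (Aset l d u)"
proof -
  have fA: "finite (Aset l d u)"
    using finite_mons by (rule finite_subset[rotated]) (auto simp: Aset_def)
  have "dimT1w l d u = card (RE l d \<union> Aset l d u) - card (RE l d)"
    unfolding dimT1w_def wpre_eq[OF assms] Rel_eq
    using fA finite_RE by (simp add: dim_supp_in)
  also have "\<dots> = card (Aset l d u)"
    using fA finite_RE by (subst card_Un_disjoint) (auto simp: Aset_def)
  finally show ?thesis .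
qed


lemma eps_RE:
  assumes "i \<in> {1..l}" "d \<ge> 1" "a \<in> mons l d"
    and row: "\<forall>j\<in>{1..d}. a (i, j) \<ge> 1"
  shows "a \<in> RE l d"
proof -
  have sum_a: "(\<Sum>p\<in>idx l d. a p) = d" using assms(3) by (simp add: mons_def)
  have split: "(\<Sum>p\<in>idx l d. a p) = (\<Sum>j\<in>{1..d}. a (i,j)) + (\<Sum>i'\<in>{1..l} - {i}. \<Sum>j\<in>{1..d}. a (i',j))"
    unfolding sum_idx using assms(1) by (simp add: sum.remove)
  have ge: "(\<Sum>j\<in>{1..d}. a (i,j)) \<ge> (\<Sum>j\<in>{1..d}. 1)" using row by (intro sum_mono) auto
  then have ge': "(\<Sum>j\<in>{1..d}. a (i,j)) \<ge> d" by simp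
  have rest: "(\<Sum>i'\<in>{1..l} - {i}. \<Sum>j\<in>{1..d}. a (i',j)) = 0" using sum_a split ge' by linarith
  have rowsum: "(\<Sum>j\<in>{1..d}. a (i,j)) = d" using sum_a split ge' by linarith
  have off: "a (i', j) = 0" if "i' \<in> {1..l}" "i' \<noteq> i" "j \<in> {1..d}" for i' j
    using rest that by simp
  have "(\<Sum>j\<in>{1..d}. a (i,j) - 1) = (\<Sum>j\<in>{1..d}. a (i,j)) - (\<Sum>j\<in>{1..d}. 1)"
    using row by (intro sum_subtractf_nat) auto
  then have "(\<Sum>j\<in>{1..d}. a (i,j) - 1) = 0" using rowsum by simp
  then have z: "\<forall>j\<in>{1..d}. a (i,j) - 1 = 0" by (subst (asm) sum_eq_0_iff) auto
  have one: "a (i, j) = 1" if "j \<in> {1..d}" for j using z row that by force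
  have "a = relexp d i 1 i 1"
  proof
    fix p :: "nat \<times> nat"
    obtain x y where p: "p = (x, y)" by (cases p)
    show "a p = relexp d i 1 i 1 p"
    proof (cases "p \<in> idx l d")
      case True
      then show ?thesis using one off assms(1,2) by (auto simp: p relexp_def idx_iff)
    next
      case False
      then have "a p = 0" using assms(3) unfolding mons_def by blast
      then show ?thesis using False assms(1,2) by (auto simp: p relexp_def idx_iff)
    qed
  qed
  then show ?thesis using assms(1,2) unfolding RE_def by fastforce
qed

lemma unique_mon:
  assumes "l \<ge> 1" "d \<ge> 1" "a \<in> mons l d" "b \<in> mons l d" "a \<noteq> b"
    and M: "Meq l d (\<lambda>p. int (a p)) (\<lambda>p. int (b p))"
  shows "a \<in> RE l d"
proof -
  obtain s where s: "\<forall>i\<in>{1..l}. \<forall>j\<in>{1..d}. int (a (i,j)) - int (b (i,j)) = s i"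
    and s0: "(\<Sum>i\<in>{1..l}. s i) = 0" using M unfolding Meq_iff[OF assms(1)] by blast
  have "\<exists>i\<in>{1..l}. s i > 0"
  proof (rule ccontr)
    assume "\<not> (\<exists>i\<in>{1..l}. s i > 0)"
    then have "\<forall>i\<in>{1..l}. s i \<le> 0" by auto
    then have "\<forall>i\<in>{1..l}. - s i \<ge> 0" by auto
    moreover have "(\<Sum>i\<in>{1..l}. - s i) = 0" using s0 by (simp add: sum_negf)
    ultimately have z: "\<forall>i\<in>{1..l}. s i = 0" using sum_nonneg_eq_0_iff[of "{1..l}" "\<lambda>i. - s i"] by auto
    have "a = b"
    proof
      fix p :: "nat \<times> nat"
      obtain x y where p: "p = (x, y)" by (cases p)
      show "a p = b p"
      proof (cases "p \<in> idx l d")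
        case True then show ?thesis using s z by (auto simp: p idx_iff)
      next
        case False then show ?thesis using assms(3,4) unfolding mons_def by (metis (mono_tags, lifting) mem_Collect_eq)
      qed
    qed
    then show False using assms(5) by simp
  qed
  then obtain i where i: "i \<in> {1..l}" "s i > 0" by blast
  have "\<forall>j\<in>{1..d}. a (i, j) \<ge> 1" using s i by fastforce
  then show ?thesis using eps_RE[OF i(1) assms(2,3)] by blast
qed

lemma Aset_unique:
  assumes "l \<ge> 1" "d \<ge> 1" "a \<in> Aset l d u" "b \<in> Aset l d u"
  shows "a = b"
proof (rule ccontr)
  assume ne: "a \<noteq> b"
  have "Meq l d (\<lambda>p. int (a p) - epsv d 1 p) (\<lambda>p. int (b p) - epsv d 1 p)"
  proof -
    have Ma: "Meq l d (\<lambda>p. int (a p) - epsv d 1 p) u" using assms(3) by (simp add: Aset_def)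
    have Mb: "Meq l d (\<lambda>p. int (b p) - epsv d 1 p) u" using assms(4) by (simp add: Aset_def)
    show ?thesis by (rule Meq_trans[OF assms(1) Ma Meq_sym[OF assms(1) Mb]])
  qed
  then have "Meq l d (\<lambda>p. int (a p)) (\<lambda>p. int (b p))" by (subst Meq_cong) auto
  then have "a \<in> RE l d" using unique_mon[OF assms(1,2) _ _ ne] assms by (auto simp: Aset_def)
  then show False using assms by (auto simp: Aset_def)
qed


lemma Aset_inPhi:
  assumes "l \<ge> 1" "d \<ge> 1" "u \<in> Zvec l d" "degM l d u = 0" "a \<in> Aset l d u"
  shows "inPhi l d u"
proof -
  have am: "a \<in> mons l d" and aR: "a \<notin> RE l d"
    and M: "Meq l d (\<lambda>p. int (a p) - epsv d 1 p) u" using assms(5) by (auto simp: Aset_def)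
  obtain c where c: "\<forall>p\<in>idx l d. (int (a p) - epsv d 1 p) - u p = (\<Sum>k\<in>{2..l}. c k * (epsv d 1 p - epsv d k p))"
    using M by (auto simp: Meq_def)
  have sd: "in_sigma_dual l d (\<lambda>p. u p + epsv d 1 p)"
    unfolding in_sigma_dual_def
  proof (intro exI[of _ "\<lambda>p. real (a p)"] conjI exI[of _ "\<lambda>k. - real_of_int (c k)"] ballI)
    fix p assume p: "p \<in> idx l d"
    have "real_of_int (u p + epsv d 1 p) - real (a p) = - real_of_int ((int (a p) - epsv d 1 p) - u p)"
      by simp
    also have "\<dots> = - real_of_int (\<Sum>k\<in>{2..l}. c k * (epsv d 1 p - epsv d k p))" using c p by simp
    also have "\<dots> = (\<Sum>k\<in>{2..l}. - real_of_int (c k) * real_of_int (epsv d 1 p - epsv d k p))"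
      by (simp add: sum_negf)
    finally show "real_of_int (u p + epsv d 1 p) - real (a p)
        = (\<Sum>k\<in>{2..l}. - real_of_int (c k) * real_of_int (epsv d 1 p - epsv d k p))" .
  qed simp
  have notE: "\<not> Meq l d u (\<lambda>p. ebas i j p - ebas i' j' p)"
    if ij: "i \<in> {1..l}" "j \<in> {1..d}" "i' \<in> {1..l}" "j' \<in> {1..d}" for i j i' j'
  proof
    assume E: "Meq l d u (\<lambda>p. ebas i j p - ebas i' j' p)"
    let ?r = "relexp d i' j' i j"
    have rm: "?r \<in> mons l d" using relexp_mons ij by blast
    have "Meq l d (\<lambda>p. int (?r p) - epsv d 1 p) (\<lambda>p. ebas i j p - ebas i' j' p)"
      using relexp_Meq[OF assms(1)] ij by blast
    then have "Meq l d (\<lambda>p. int (a p) - epsv d 1 p) (\<lambda>p. int (?r p) - epsv d 1 p)"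
      by (rule Meq_trans[OF assms(1) Meq_trans[OF assms(1) M E] Meq_sym[OF assms(1)]])
    then have M2: "Meq l d (\<lambda>p. int (a p)) (\<lambda>p. int (?r p))" by (subst Meq_cong) auto
    have "?r \<in> RE l d" using ij unfolding RE_def by blast
    then have "a \<in> RE l d"
      using unique_mon[OF assms(1,2) am rm _ M2] by (cases "a = ?r") auto
    then show False using aR by simp
  qed
  show ?thesis using assms(3,4) sd notE by (auto simp: inPhi_def inPsi_def)
qed

lemma inPhi_Aset:
  assumes "l \<ge> 1" "d \<ge> 1" "inPhi l d u"
  shows "\<exists>a. a \<in> Aset l d u"
proof -
  have uZ: "u \<in> Zvec l d" and deg: "degM l d u = 0"
    and sd: "in_sigma_dual l d (\<lambda>p. u p + epsv d 1 p)"
    and notE: "\<And>i j i' j'. i \<in> {1..l} \<Longrightarrow> j \<in> {1..d} \<Longrightarrow> i' \<in> {1..l} \<Longrightarrow> j' \<in> {1..d} \<Longrightarrow>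
                 \<not> Meq l d u (\<lambda>p. ebas i j p - ebas i' j' p)"
    using assms(3) by (auto simp: inPhi_def inPsi_def)
  obtain c r where c0: "\<forall>p\<in>idx l d. c p \<ge> 0"
    and cr: "\<forall>p\<in>idx l d. real_of_int (u p + epsv d 1 p) - c p
         = (\<Sum>k\<in>{2..l}. r k * real_of_int (epsv d 1 p - epsv d k p))"
    using sd by (auto simp: in_sigma_dual_def)
  define \<sigma> where "\<sigma> i = (if i = 1 then 1 - (\<Sum>k\<in>{2..l}. r k) else r i)" for i
  have sig_sum: "(\<Sum>i\<in>{1..l}. \<sigma> i) = 1"
  proof -
    have "(\<Sum>i\<in>{2..l}. \<sigma> i) = (\<Sum>i\<in>{2..l}. r i)" by (intro sum.cong) (auto simp: \<sigma>_def)
    then show ?thesis using sum_split1[OF assms(1), of \<sigma>] by (simp add: \<sigma>_def)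
  qed
  have cform: "c (i,j) = u (i,j) + \<sigma> i" if "i \<in> {1..l}" "j \<in> {1..d}" for i j
  proof -
    have "real_of_int (u (i,j) + epsv d 1 (i,j)) - c (i,j) = (if i = 1 then (\<Sum>k\<in>{2..l}. r k) else - r i)"
      using cr that eps_comb[OF that, of r] by (simp add: idx_iff)
    moreover have "epsv d 1 (i,j) = (if i = 1 then 1 else 0)" using that by (simp add: epsv_def)
    ultimately show ?thesis by (auto simp: \<sigma>_def split: if_splits)
  qed
  have sig_ge: "- u (i,j) \<le> \<lfloor>\<sigma> i\<rfloor>" if "i \<in> {1..l}" "j \<in> {1..d}" for i j
  proof -
    have "0 \<le> c (i,j)" using c0 that by (simp add: idx_iff)
    then have "real_of_int (- u (i,j)) \<le> \<sigma> i" using cform[OF that] by simp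
    then show ?thesis by (simp add: le_floor_iff)
  qed
  define F where "F = (\<Sum>i\<in>{1..l}. \<lfloor>\<sigma> i\<rfloor>)"
  have "real_of_int F \<le> (\<Sum>i\<in>{1..l}. \<sigma> i)" unfolding F_def of_int_sum
    by (intro sum_mono) simp
  then have F1: "F \<le> 1" using sig_sum by simp
  define t where "t i = \<lfloor>\<sigma> i\<rfloor> + (if i = 1 then 1 - F else 0)" for i
  have t_sum: "(\<Sum>i\<in>{1..l}. t i) = 1"
    using assms(1) by (simp add: t_def sum.distrib F_def)
  have t_ge: "0 \<le> u (i,j) + t i" if "i \<in> {1..l}" "j \<in> {1..d}" for i j
    using sig_ge[OF that] F1 by (auto simp: t_def)
  define a :: expo where "a p = (if p \<in> idx l d then nat (u p + t (fst p)) else 0)" for p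
  have a_int: "int (a (i,j)) = u (i,j) + t i" if "i \<in> {1..l}" "j \<in> {1..d}" for i j
    using t_ge[OF that] that by (simp add: a_def idx_iff)
  have "int (\<Sum>p\<in>idx l d. a p) = (\<Sum>p\<in>idx l d. int (a p))" by simp
  also have "\<dots> = (\<Sum>i\<in>{1..l}. \<Sum>j\<in>{1..d}. u (i,j) + t i)"
    unfolding sum_idx using a_int by (intro sum.cong) auto
  also have "\<dots> = (\<Sum>p\<in>idx l d. u p) + (\<Sum>i\<in>{1..l}. int d * t i)"
    unfolding sum_idx by (simp add: sum.distrib)
  also have "\<dots> = int d" using deg t_sum by (simp add: degM_def sum_distrib_left[symmetric])
  finally have "(\<Sum>p\<in>idx l d. a p) = d" by (simp only: of_nat_eq_iff)
  then have am: "a \<in> mons l d" by (auto simp: mons_def a_def)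
  have M: "Meq l d (\<lambda>p. int (a p) - epsv d 1 p) u"
  proof -
    define s where "s i = t i - (if i = 1 then 1 else 0)" for i
    have "\<forall>i\<in>{1..l}. \<forall>j\<in>{1..d}. (int (a (i,j)) - epsv d 1 (i,j)) - u (i,j) = s i"
      using a_int by (auto simp: s_def epsv_def)
    moreover have "(\<Sum>i\<in>{1..l}. s i) = 0" using t_sum assms(1) by (simp add: s_def sum_subtractf)
    ultimately show ?thesis unfolding Meq_iff[OF assms(1)] by blast
  qed
  have aR: "a \<notin> RE l d"
  proof
    assume "a \<in> RE l d"
    then obtain i j i' j' where ij: "i \<in> {1..l}" "j \<in> {1..d}" "i' \<in> {1..l}" "j' \<in> {1..d}"
      and ar: "a = relexp d i j i' j'" unfolding RE_def by blast
    have "Meq l d (\<lambda>p. int (a p) - epsv d 1 p) (\<lambda>p. ebas i' j' p - ebas i j p)"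
      using relexp_Meq[OF assms(1) ij] ar by simp
    then have "Meq l d u (\<lambda>p. ebas i' j' p - ebas i j p)"
      by (rule Meq_trans[OF assms(1) Meq_sym[OF assms(1) M]])
    then show False using notE[OF ij(3,4,1,2)] by simp
  qed
  show ?thesis using am aR M by (auto simp: Aset_def)
qed


lemma sum_eps: "l \<ge> 1 \<Longrightarrow> (\<Sum>p\<in>idx l d. epsv d 1 p) = int d"
proof -
  assume l: "l \<ge> 1"
  have "(\<Sum>p\<in>idx l d. epsv d 1 p) = (\<Sum>i\<in>{1..l}. \<Sum>j\<in>{1..d}. if i = 1 then 1 else 0)"
    unfolding sum_idx by (intro sum.cong) (auto simp: epsv_def)
  also have "\<dots> = (\<Sum>i\<in>{1..l}. if i = 1 then int d else 0)" by (intro sum.cong) auto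
  also have "\<dots> = int d" using l by (simp add: sum.delta')
  finally show ?thesis .
qed

theorem mainTheorem18:
  fixes l d :: nat
  assumes "l \<ge> 2" and "d \<ge> 2"
  shows "(\<forall>u \<in> Zvec l d. degM l d u = 0 \<longrightarrow>
            dimT1w l d u = (if inPhi l d u then 1 else 0))
       \<and> module.span sc (Rel l d \<union> (\<Union>u \<in> {u. inPhi l d u}. wpre l d u)) = Pd l d"
proof
  have l1: "l \<ge> 1" and d1: "d \<ge> 1" using assms by auto
  show "\<forall>u \<in> Zvec l d. degM l d u = 0 \<longrightarrow> dimT1w l d u = (if inPhi l d u then 1 else 0)"
  proof (intro ballI impI)
    fix u assume uZ: "u \<in> Zvec l d" and deg: "degM l d u = 0"
    show "dimT1w l d u = (if inPhi l d u then 1 else 0)"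
    proof (cases "inPhi l d u")
      case True
      then obtain a where a: "a \<in> Aset l d u" using inPhi_Aset[OF l1 d1] by blast
      then have "Aset l d u = {a}" using Aset_unique[OF l1 d1] by blast
      then show ?thesis using True by (simp add: dimT1w_eq[OF l1])
    next
      case False
      then have "Aset l d u = {}" using Aset_inPhi[OF l1 d1 uZ deg] by blast
      then show ?thesis using False by (simp add: dimT1w_eq[OF l1])
    qed
  qed
  let ?S = "Rel l d \<union> (\<Union>u \<in> {u. inPhi l d u}. wpre l d u)"
  show "module.span sc ?S = Pd l d"
  proof
    have "?S \<subseteq> Pd l d"
      using RE_mons by (auto simp: Rel_eq Pd_eq supp_in_def wpre_def)
    then show "vs.span ?S \<subseteq> Pd l d"
      by (rule vs.span_minimal) (simp add: Pd_eq subspace_supp_in)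
  next
    have "monomial ` mons l d \<subseteq> ?S"
    proof
      fix m assume "m \<in> monomial ` mons l d"
      then obtain a where m: "m = monomial a" and am: "a \<in> mons l d" by blast
      show "m \<in> ?S"
      proof (cases "a \<in> RE l d")
        case True
        then show ?thesis by (auto simp: m Rel_eq supp_in_def monomial_def)
      next
        case False
        define u where "u p = int (a p) - epsv d 1 p" for p
        have uZ: "u \<in> Zvec l d"
          using am l1 by (auto simp: Zvec_def u_def mons_def epsv_def idx_def)
        have "degM l d u = (\<Sum>p\<in>idx l d. int (a p)) - (\<Sum>p\<in>idx l d. epsv d 1 p)"
          by (simp add: degM_def u_def sum_subtractf)
        also have "\<dots> = 0" using am sum_eps[OF l1]
          by (simp add: mons_def flip: of_nat_sum)
        finally have deg: "degM l d u = 0" .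
        have "Meq l d (\<lambda>p. int (a p) - epsv d 1 p) u"
          unfolding Meq_def u_def by (intro exI[of _ "\<lambda>_. 0"]) simp
        then have aA: "a \<in> Aset l d u" using am False by (simp add: Aset_def)
        then have "inPhi l d u" using Aset_inPhi[OF l1 d1 uZ deg] by blast
        moreover have "m \<in> wpre l d u"
          using aA by (simp add: wpre_eq[OF l1] m supp_in_def monomial_def)
        ultimately show ?thesis by blast
      qed
    qed
    then have "vs.span (monomial ` mons l d) \<subseteq> vs.span ?S" by (rule vs.span_mono)
    then show "Pd l d \<subseteq> vs.span ?S" by (simp add: Pd_eq span_monomials[OF finite_mons])
  qed
qed

end
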